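(* Let $P\subset\mathbb{R}^{n+1}$ be a convex polytope and $M=\partial P$ with its intrinsic metric. Suppose that $M$ is symmetric with respect to a hyperplane $H$, and let $r_H$ denote the reflection in $H$. Let $p,q\in M$ with $q$ a farthest point of $p$. If $p,q\in M\setminus H$, then $q$ lies on the opposite side of $H$ from $p$. If $p\in H$, then $r_H(q)$ is also a farthest point of $p$.
   Context: The intrinsic metric $d$ on $M=\partial P$ is given by $d(p,q)=$ the infimum of Euclidean lengths of paths in $M$ from $p$ to $q$. A point $q\in M$ is a farthest point of $p\in M$ if $d(p,q)\ge d(p,q')$ for all $q'\in M$. *)

theory Defs
  imports "HOL-Analysis.Analysis"
begin

definition path_len :: "(real \<Rightarrow> 'a::euclidean_space) \<Rightarrow> ereal" where
  "path_len g = (SUP ts \<in> {ts. sorted ts \<and> set ts \<subseteq> {0..1}}.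
      ereal (\<Sum>i < length ts - 1. dist (g (ts ! i)) (g (ts ! Suc i))))"

definition intrinsic_dist :: "'a::euclidean_space set \<Rightarrow> 'a \<Rightarrow> 'a \<Rightarrow> ereal" where
  "intrinsic_dist M p q = (INF g \<in> {g. path g \<and> path_image g \<subseteq> M \<and>
      pathstart g = p \<and> pathfinish g = q}. path_len g)"

definition farthest_point :: "'a::euclidean_space set \<Rightarrow> 'a \<Rightarrow> 'a \<Rightarrow> bool" where
  "farthest_point M p q \<longleftrightarrow> q \<in> M \<and> (\<forall>q'\<in>M. intrinsic_dist M p q' \<le> intrinsic_dist M p q)"

definition reflect :: "'a::euclidean_space \<Rightarrow> real \<Rightarrow> 'a \<Rightarrow> 'a" where
  "reflect a b x = x - (2 * (a \<bullet> x - b) / (a \<bullet> a)) *\<^sub>R a"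

end

theory Submission
  imports Defs
begin


fun ps :: "'a::metric_space list \<Rightarrow> real" where
  "ps [] = 0" | "ps [x] = 0" | "ps (x#y#xs) = dist x y + ps (y#xs)"

lemma ps_nonneg: "0 \<le> ps xs"
  by (induction xs rule: ps.induct) auto

lemma ps_sum: "(\<Sum>i < length xs - 1. dist (xs!i) (xs!Suc i)) = ps xs"
proof (induction xs rule: ps.induct)
  case (3 x y xs)
  have "(\<Sum>i < length (x#y#xs) - 1. dist ((x#y#xs)!i) ((x#y#xs)!Suc i))
      = (\<Sum>i < Suc (length (y#xs) - 1). dist ((x#y#xs)!i) ((x#y#xs)!Suc i))" by simp
  also have "\<dots> = dist x y + (\<Sum>i < length (y#xs) - 1. dist ((y#xs)!i) ((y#xs)!Suc i))"
    by (subst sum.lessThan_Suc_shift) simp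
  finally show ?case using 3 by simp
qed auto

lemma ps_map_sum: "(\<Sum>i < length ts - 1. dist (g (ts ! i)) (g (ts ! Suc i))) = ps (map g ts)"
proof -
  have "(\<Sum>i < length ts - 1. dist (g (ts ! i)) (g (ts ! Suc i)))
      = (\<Sum>i < length (map g ts) - 1. dist ((map g ts) ! i) ((map g ts) ! Suc i))"
    by (rule sum.cong) auto
  also have "\<dots> = ps (map g ts)" by (rule ps_sum)
  finally show ?thesis .
qed

lemma path_len_ps: "path_len g = (SUP ts \<in> {ts. sorted ts \<and> set ts \<subseteq> {0..1}}. ereal (ps (map g ts)))"
  unfolding path_len_def ps_map_sum ..

lemma ps_cons_le: "ps xs \<le> ps (x#xs)"
  by (cases xs) (auto simp: ps_nonneg)

lemma ps_snoc_le: "ps xs \<le> ps (xs @ [x])"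
  by (induction xs rule: ps.induct) auto

lemma ps_insort_aux: "ps (map g (y # ts)) \<le> ps (map g (y # insort x ts))"
proof (induction ts arbitrary: y)
  case Nil
  then show ?case by simp
next
  case (Cons z zs)
  show ?case
  proof (cases "x \<le> z")
    case True
    have "dist (g y) (g z) \<le> dist (g y) (g x) + dist (g x) (g z)" by (rule dist_triangle)
    then show ?thesis using True by simp
  next
    case False
    then show ?thesis using Cons[of z] by simp
  qed
qed

lemma ps_insort: "ps (map g ts) \<le> ps (map g (insort x ts))"
proof (cases ts)
  case Nil then show ?thesis by simp
next
  case (Cons y ys)
  then show ?thesis
    using ps_insort_aux[of g y ys x] ps_nonneg by (auto simp: dist_commute)
qed

lemma ps_gen:
  assumes "\<forall>x\<in>set xs. \<forall>y\<in>set xs. dist (f x) (f y) \<le> C * dist x y - l * dist (t x) (t y)"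
  shows "ps (map f xs) \<le> C * ps xs - l * ps (map t xs)"
  using assms
proof (induction xs rule: ps.induct)
  case (3 x y xs)
  then have "ps (map f (y#xs)) \<le> C * ps (y#xs) - l * ps (map t (y#xs))" by simp
  moreover have "dist (f x) (f y) \<le> C * dist x y - l * dist (t x) (t y)" using 3 by simp
  ultimately show ?case by (simp add: algebra_simps)
qed auto

lemma ps_lip1:
  assumes "\<forall>x\<in>set xs. \<forall>y\<in>set xs. dist (f x) (f y) \<le> dist x y"
  shows "ps (map f xs) \<le> ps xs"
  using ps_gen[of xs f 1 0 f] assms by simp

lemma ps_last: "\<bar>x - last (x#xs)\<bar> \<le> ps (x#xs :: real list)"
proof (induction xs arbitrary: x)
  case (Cons y ys)
  have "\<bar>x - last (y#ys)\<bar> \<le> \<bar>x - y\<bar> + \<bar>y - last (y#ys)\<bar>" by linarith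
  then show ?case using Cons[of y] by (simp add: dist_real_def)
qed simp

lemma ps_var: "z \<in> set (x#xs) \<Longrightarrow> \<bar>x - z\<bar> + \<bar>z - last (x#xs)\<bar> \<le> ps (x#xs :: real list)"
proof (induction xs arbitrary: x)
  case Nil then show ?case by simp
next
  case (Cons y ys)
  show ?case
  proof (cases "z = x")
    case True
    then show ?thesis using ps_last[of x "y#ys"] by simp
  next
    case False
    then have "z \<in> set (y#ys)" using Cons by simp
    then have "\<bar>y - z\<bar> + \<bar>z - last (y#ys)\<bar> \<le> ps (y#ys)" by (rule Cons.IH)
    moreover have "\<bar>x - z\<bar> \<le> \<bar>x - y\<bar> + \<bar>y - z\<bar>" by linarith
    ultimately show ?thesis by (simp add: dist_real_def)
  qed
qed

lemma ps_lipK: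
  assumes "sorted (x#ts)" "\<forall>s\<in>set (x#ts). \<forall>t\<in>set (x#ts). dist (g s) (g t) \<le> K * \<bar>s - t\<bar>"
  shows "ps (map g (x#ts)) \<le> K * (last (x#ts) - x)"
  using assms
proof (induction ts arbitrary: x)
  case (Cons y ys)
  have "ps (map g (y#ys)) \<le> K * (last (y#ys) - y)"
    using Cons by auto
  moreover have "dist (g x) (g y) \<le> K * \<bar>x - y\<bar>" using Cons.prems by simp
  moreover have "x \<le> y" using Cons.prems by simp
  ultimately show ?case by (simp add: algebra_simps)
qed simp

lemma path_len_nonneg: "0 \<le> path_len g"
proof -
  have "ereal (ps (map g [])) \<le> path_len g"
    unfolding path_len_ps by (rule SUP_upper) auto
  then show ?thesis by (simp add: zero_ereal_def)
qed

lemma path_len_lip: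
  assumes "\<forall>s\<in>{0..1}. \<forall>t\<in>{0..1}. dist (g s) (g t) \<le> K * \<bar>s - t\<bar>" "0 \<le> K"
  shows "path_len g \<le> ereal K"
  unfolding path_len_ps
proof (rule SUP_least)
  fix ts :: "real list" assume ts: "ts \<in> {ts. sorted ts \<and> set ts \<subseteq> {0..1}}"
  show "ereal (ps (map g ts)) \<le> ereal K"
  proof (cases ts)
    case Nil then show ?thesis using assms by simp
  next
    case (Cons x xs)
    have L: "\<forall>s\<in>set (x#xs). \<forall>t\<in>set (x#xs). dist (g s) (g t) \<le> K * \<bar>s - t\<bar>"
      using assms(1) ts Cons by blast
    have "ps (map g ts) \<le> K * (last ts - x)"
      using ps_lipK[of x xs g K, OF _ L] ts Cons by auto
    also have "\<dots> \<le> K * 1"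
      using ts Cons assms last_in_set[of ts] by (intro mult_left_mono) auto
    finally show ?thesis by simp
  qed
qed

lemma path_len_comp_lip1:
  assumes "\<forall>x\<in>path_image g. \<forall>y\<in>path_image g. dist (f x) (f y) \<le> dist x y"
  shows "path_len (f \<circ> g) \<le> path_len g"
  unfolding path_len_ps
proof (rule SUP_mono)
  fix ts :: "real list" assume ts: "ts \<in> {ts. sorted ts \<and> set ts \<subseteq> {0..1}}"
  have "ps (map f (map g ts)) \<le> ps (map g ts)"
    by (rule ps_lip1) (use assms ts in \<open>auto simp: path_image_def\<close>)
  then show "\<exists>m\<in>{ts. sorted ts \<and> set ts \<subseteq> {0..1}}. ereal (ps (map (f \<circ> g) ts)) \<le> ereal (ps (map g m))"
    using ts by auto
qed


lemma key_ineq: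
  fixes d e l X :: real
  assumes "0 \<le> d" "\<bar>e\<bar> \<le> d" "0 \<le> l" "0 \<le> X" "X\<^sup>2 \<le> d\<^sup>2 - e\<^sup>2"
  shows "X \<le> (1 + l\<^sup>2/2) * d - l * \<bar>e\<bar>"
proof (cases "d = 0")
  case True
  then have "X\<^sup>2 \<le> 0" using assms by simp
  then have "X = 0" using assms by (simp add: power2_eq_square) (metis mult_le_0_iff order_antisym_conv)
  then show ?thesis using True assms by simp
next
  case False
  then have d: "0 < d" using assms by simp
  define Y where "Y = d - e\<^sup>2/(2*d)"
  have "e\<^sup>2 \<le> d\<^sup>2" using assms by (metis abs_ge_zero power2_abs power_mono)
  then have "e\<^sup>2/(2*d) \<le> d\<^sup>2/(2*d)" using d by (intro divide_right_mono) auto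
  also have "d\<^sup>2/(2*d) = d/2" using d by (simp add: power2_eq_square)
  finally have "e\<^sup>2/(2*d) \<le> d/2" .
  then have Y0: "0 \<le> Y" unfolding Y_def using d by linarith
  have "Y\<^sup>2 = d\<^sup>2 - e\<^sup>2 + (e\<^sup>2/(2*d))\<^sup>2" unfolding Y_def using d
    by (simp add: power2_eq_square field_simps)
  then have "X\<^sup>2 \<le> Y\<^sup>2" using assms by (smt (verit) zero_le_power2)
  then have XY: "X \<le> Y" using Y0 assms by (meson power2_le_imp_le)
  have "0 \<le> (\<bar>e\<bar> - l*d)\<^sup>2" by simp
  then have "2*d*l*\<bar>e\<bar> - l\<^sup>2*d\<^sup>2 \<le> e\<^sup>2"
    by (simp add: power2_eq_square algebra_simps)
  then have "l*\<bar>e\<bar> - l\<^sup>2*d/2 \<le> e\<^sup>2/(2*d)" using d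
    by (simp add: field_simps power2_eq_square)
  then have "Y \<le> (1 + l\<^sup>2/2) * d - l * \<bar>e\<bar>" unfolding Y_def by (simp add: algebra_simps)
  then show ?thesis using XY by simp
qed

lemma path_len_gain:
  fixes g :: "real \<Rightarrow> 'a::euclidean_space" and f :: "'a \<Rightarrow> 'a" and tau :: "'a \<Rightarrow> real"
  assumes L: "path_len g = ereal L"
  and t0: "0 < t0"
  and F: "\<forall>x\<in>path_image g. \<forall>y\<in>path_image g. (dist (f x) (f y))\<^sup>2 \<le> (dist x y)\<^sup>2 - (tau x - tau y)\<^sup>2"
  and g0: "tau (g 0) = t0" and g1: "tau (g 1) = t0" and s: "s \<in> {0..1}" and gs: "tau (g s) = 0"
  shows "0 < L \<and> path_len (f \<circ> g) \<le> ereal (L - 2*t0\<^sup>2/L)"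
proof -
  have tl: "\<bar>tau x - tau y\<bar> \<le> dist x y" if "x \<in> path_image g" "y \<in> path_image g" for x y
  proof -
    have "(tau x - tau y)\<^sup>2 \<le> (dist x y)\<^sup>2" using F that
      by (smt (verit) zero_le_power2)
    then show ?thesis by (metis abs_ge_zero power2_abs power2_le_imp_le zero_le_dist)
  qed
  have PL: "ps (map g ts) \<le> L" if "sorted ts" "set ts \<subseteq> {0..1}" for ts
  proof -
    have "ereal (ps (map g ts)) \<le> path_len g"
      unfolding path_len_ps by (rule SUP_upper) (use that in auto)
    then show ?thesis using L by simp
  qed
  have im: "g t \<in> path_image g" if "t \<in> {0..1}" for t using that by (simp add: path_image_def)
  have "ps (map g [0,s,1]) \<le> L" using s by (intro PL) auto
  moreover have "\<bar>tau (g 0) - tau (g s)\<bar> \<le> dist (g 0) (g s)" "\<bar>tau (g s) - tau (g 1)\<bar> \<le> dist (g s) (g 1)"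
    using tl im s by auto
  ultimately have L2: "2*t0 \<le> L" using g0 g1 gs t0 by simp
  then have Lpos: "0 < L" using t0 by simp
  define l where "l = 2*t0/L"
  have l0: "0 \<le> l" using t0 Lpos unfolding l_def by simp
  have "path_len (f \<circ> g) \<le> ereal ((1 + l\<^sup>2/2) * L - l * (2*t0))"
    unfolding path_len_ps
  proof (rule SUP_least)
    fix ts :: "real list" assume ts: "ts \<in> {ts. sorted ts \<and> set ts \<subseteq> {0..1}}"
    define ts' where "ts' = 0 # (insort s ts @ [1])"
    have s': "sorted ts'" "set ts' \<subseteq> {0..1}" using ts s unfolding ts'_def
      by (auto simp: sorted_append sorted_insort set_insort_key)
    have "ps (map (f\<circ>g) ts) \<le> ps (map (f\<circ>g) (insort s ts))" by (rule ps_insort)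
    also have "\<dots> \<le> ps (map (f\<circ>g) (insort s ts) @ [(f\<circ>g) 1])" by (rule ps_snoc_le)
    also have "\<dots> \<le> ps ((f\<circ>g) 0 # (map (f\<circ>g) (insort s ts) @ [(f\<circ>g) 1]))" by (rule ps_cons_le)
    also have "\<dots> = ps (map f (map g ts'))" unfolding ts'_def by simp
    also have "\<dots> \<le> (1 + l\<^sup>2/2) * ps (map g ts') - l * ps (map tau (map g ts'))"
    proof (rule ps_gen, intro ballI)
      fix x y assume xy: "x \<in> set (map g ts')" "y \<in> set (map g ts')"
      then have xy': "x \<in> path_image g" "y \<in> path_image g" using s' im by auto
      show "dist (f x) (f y) \<le> (1 + l\<^sup>2/2) * dist x y - l * dist (tau x) (tau y)"
        using key_ineq[of "dist x y" "tau x - tau y" l "dist (f x) (f y)"] tl[OF xy'] F xy' l0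
        by (simp add: dist_real_def)
    qed
    also have "\<dots> \<le> (1 + l\<^sup>2/2) * L - l * (2*t0)"
    proof -
      have "ps (map g ts') \<le> L" using PL s' by simp
      moreover have "2*t0 \<le> ps (map tau (map g ts'))"
      proof -
        have "map tau (map g ts') = tau (g 0) # map tau (map g (insort s ts @ [1]))" unfolding ts'_def by simp
        moreover have "tau (g s) \<in> set (tau (g 0) # map tau (map g (insort s ts @ [1])))"
          by (simp add: set_insort_key)
        ultimately have "\<bar>tau (g 0) - tau (g s)\<bar> + \<bar>tau (g s) - last (tau (g 0) # map tau (map g (insort s ts @ [1])))\<bar>
            \<le> ps (map tau (map g ts'))" using ps_var by metis
        then show ?thesis using g0 g1 gs t0 by simp
      qed
      moreover have "0 \<le> 1 + l\<^sup>2/2" by simp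
      ultimately show ?thesis using l0
        by (smt (verit, best) mult_left_mono)
    qed
    finally show "ereal (ps (map (f \<circ> g) ts)) \<le> ereal ((1 + l\<^sup>2/2) * L - l * (2*t0))" by simp
  qed
  also have "(1 + l\<^sup>2/2) * L - l * (2*t0) = L - 2*t0\<^sup>2/L"
    unfolding l_def using Lpos by (simp add: field_simps power2_eq_square)
  finally show ?thesis using Lpos by (simp add: comp_def)
qed



definition nv :: "'a::euclidean_space \<Rightarrow> 'a" where "nv a = a /\<^sub>R norm a"
definition hgt :: "'a::euclidean_space \<Rightarrow> real \<Rightarrow> 'a \<Rightarrow> real" where "hgt a b x = (a \<bullet> x - b) / norm a"
definition hor :: "'a::euclidean_space \<Rightarrow> real \<Rightarrow> 'a \<Rightarrow> 'a" where "hor a b x = x - hgt a b x *\<^sub>R nv a"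

lemma nv_inner: "a \<noteq> 0 \<Longrightarrow> a \<bullet> nv a = norm a"
  by (simp add: nv_def power2_norm_eq_inner[symmetric] power2_eq_square)

lemma nv_nv: "a \<noteq> 0 \<Longrightarrow> nv a \<bullet> nv a = 1"
  by (simp add: nv_def power2_norm_eq_inner[symmetric] power2_eq_square)

lemma hgt_plus: "a \<noteq> 0 \<Longrightarrow> hgt a b (y + s *\<^sub>R nv a) = hgt a b y + s"
  by (simp add: hgt_def inner_add_right nv_inner field_simps)

lemma hgt_hor: "a \<noteq> 0 \<Longrightarrow> hgt a b (hor a b x) = 0"
  by (simp add: hor_def hgt_def inner_diff_right nv_inner diff_divide_distrib)

lemma hor_decomp: "x = hor a b x + hgt a b x *\<^sub>R nv a"
  by (simp add: hor_def)

lemma hor_plus: "a \<noteq> 0 \<Longrightarrow> hor a b (y + s *\<^sub>R nv a) = hor a b y"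
  by (simp add: hor_def hgt_plus algebra_simps)

lemma hgt0_inner: "a \<noteq> 0 \<Longrightarrow> hgt a b y = 0 \<Longrightarrow> hgt a b z = 0 \<Longrightarrow> a \<bullet> (y - z) = 0"
  by (simp add: hgt_def inner_diff_right)

lemma pyth:
  assumes "a \<noteq> 0" "a \<bullet> u = 0"
  shows "(norm (u + s *\<^sub>R nv a))\<^sup>2 = (norm u)\<^sup>2 + s\<^sup>2"
proof -
  have "nv a \<bullet> u = 0" using assms by (simp add: nv_def)
  have "(norm (u + s *\<^sub>R nv a))\<^sup>2 = (u + s*\<^sub>R nv a) \<bullet> (u + s*\<^sub>R nv a)" by (rule power2_norm_eq_inner)
  also have "\<dots> = u\<bullet>u + 2 * s * (nv a \<bullet> u) + s * s * (nv a \<bullet> nv a)"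
    by (simp add: inner_add_left inner_add_right inner_commute algebra_simps)
  also have "\<dots> = u \<bullet> u + s\<^sup>2" using nv_nv[OF assms(1)] \<open>nv a \<bullet> u = 0\<close>
    by (simp add: power2_eq_square)
  finally show ?thesis by (simp add: power2_norm_eq_inner)
qed

lemma dist_decomp:
  assumes "a \<noteq> 0"
  shows "(dist x y)\<^sup>2 = (norm (hor a b x - hor a b y))\<^sup>2 + (hgt a b x - hgt a b y)\<^sup>2"
proof -
  have "x - y = (hor a b x - hor a b y) + (hgt a b x - hgt a b y) *\<^sub>R nv a"
    by (simp add: hor_def algebra_simps)
  moreover have "a \<bullet> (hor a b x - hor a b y) = 0"
    using hgt0_inner[OF assms hgt_hor[OF assms] hgt_hor[OF assms]] .
  ultimately show ?thesis using pyth[OF assms] by (simp add: dist_norm)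
qed

lemma reflect_eq: "a \<noteq> 0 \<Longrightarrow> reflect a b x = hor a b x - hgt a b x *\<^sub>R nv a"
proof -
  assume a: "a \<noteq> 0"
  have "(2 * (a \<bullet> x - b) / (a \<bullet> a)) *\<^sub>R a = (2 * hgt a b x) *\<^sub>R nv a"
    using a by (simp add: hgt_def nv_def power2_norm_eq_inner[symmetric] power2_eq_square field_simps)
  moreover have "(2 * hgt a b x) *\<^sub>R nv a = hgt a b x *\<^sub>R nv a + hgt a b x *\<^sub>R nv a"
    by (metis mult_2 scaleR_left_distrib)
  ultimately show ?thesis by (simp add: reflect_def hor_def algebra_simps)
qed

lemma hgt_reflect: "a \<noteq> 0 \<Longrightarrow> hgt a b (reflect a b x) = - hgt a b x"
  using hgt_plus[of a b "hor a b x" "- hgt a b x"] hgt_hor[of a b x] by (simp add: reflect_eq)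

lemma hor_reflect: "a \<noteq> 0 \<Longrightarrow> hor a b (reflect a b x) = hor a b x"
  using hor_plus[of a b "hor a b x" "- hgt a b x"] hor_plus[of a b "hor a b x" "0"] hgt_hor[of a b x]
  by (simp add: reflect_eq hor_def)

lemma reflect_reflect: "a \<noteq> 0 \<Longrightarrow> reflect a b (reflect a b x) = x"
  by (metis reflect_eq hgt_reflect hor_reflect hor_decomp minus_minus scaleR_minus_left diff_minus_eq_add)

lemma dist_reflect: "a \<noteq> 0 \<Longrightarrow> dist (reflect a b x) (reflect a b y) = dist x y"
proof -
  assume a: "a \<noteq> 0"
  have "(dist (reflect a b x) (reflect a b y))\<^sup>2 = (dist x y)\<^sup>2"
    using dist_decomp[OF a, of "reflect a b x" "reflect a b y" b] dist_decomp[OF a, of x y b]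
    by (simp add: hgt_reflect[OF a] hor_reflect[OF a] power2_commute)
  then show ?thesis by (simp add: power2_eq_iff_nonneg)
qed

lemma hgt_eq: "a \<noteq> 0 \<Longrightarrow> (a \<bullet> x - b) = norm a * hgt a b x"
  by (simp add: hgt_def)

lemma continuous_hgt: "a \<noteq> 0 \<Longrightarrow> continuous_on S (hgt a b)"
  unfolding hgt_def by (intro continuous_intros) auto

lemma continuous_hor: "a \<noteq> 0 \<Longrightarrow> continuous_on S (hor a b)"
  unfolding hor_def hgt_def by (intro continuous_intros) auto



lemma maxmin_ineq:
  fixes u v t :: real
  shows "(max \<bar>u\<bar> t - max \<bar>v\<bar> t)\<^sup>2 + (min \<bar>u\<bar> t - min \<bar>v\<bar> t)\<^sup>2 \<le> (u - v)\<^sup>2"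
proof -
  define A where "A = \<bar>u\<bar>"
  define B where "B = \<bar>v\<bar>"
  have "(A - B)\<^sup>2 \<le> (u - v)\<^sup>2" unfolding A_def B_def
    by (metis abs_ge_zero abs_triangle_ineq3 power2_abs power_mono)
  moreover have "(max A t - max B t)\<^sup>2 + (min A t - min B t)\<^sup>2 \<le> (A - B)\<^sup>2"
  proof (cases "A \<le> t"; cases "B \<le> t")
    assume "A \<le> t" "\<not> B \<le> t"
    then have "0 \<le> (t - A) * (B - t)" by simp
    then show ?thesis using \<open>A \<le> t\<close> \<open>\<not> B \<le> t\<close> by (simp add: max_def min_def power2_eq_square algebra_simps)
  next
    assume "\<not> A \<le> t" "B \<le> t"
    then have "0 \<le> (A - t) * (t - B)" by simp
    then show ?thesis using \<open>\<not> A \<le> t\<close> \<open>B \<le> t\<close> by (simp add: max_def min_def power2_eq_square algebra_simps)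
  qed (auto simp: max_def min_def power2_commute)
  ultimately show ?thesis unfolding A_def B_def by linarith
qed

context
  fixes P :: "'a::euclidean_space set" and a :: 'a and b :: real
  assumes cP: "compact P" and cvx: "convex P" and a0: "a \<noteq> 0"
    and symm: "reflect a b ` frontier P = frontier P"
begin

lemma refl_front: "x \<in> frontier P \<Longrightarrow> reflect a b x \<in> frontier P"
  using symm by blast

lemma reflect_affine: "u + v = 1 \<Longrightarrow> reflect a b (u *\<^sub>R x + v *\<^sub>R y) = u *\<^sub>R reflect a b x + v *\<^sub>R reflect a b y"
proof -
  assume uv: "u + v = 1"
  define A where "A = 2 * (a \<bullet> x - b) / (a \<bullet> a)"
  define B where "B = 2 * (a \<bullet> y - b) / (a \<bullet> a)"
  have bb: "b = u * b + v * b" using uv by (metis mult.commute mult_1 distrib_left)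
  have "2 * (a \<bullet> (u *\<^sub>R x + v *\<^sub>R y) - b) = u * (2 * (a \<bullet> x - b)) + v * (2 * (a \<bullet> y - b))"
    by (subst bb) (simp add: inner_add_right algebra_simps)
  then have s: "2 * (a \<bullet> (u *\<^sub>R x + v *\<^sub>R y) - b) / (a \<bullet> a) = u * A + v * B"
    unfolding A_def B_def by (simp add: add_divide_distrib)
  have "reflect a b (u *\<^sub>R x + v *\<^sub>R y) = u *\<^sub>R x + v *\<^sub>R y - (u * A + v * B) *\<^sub>R a"
    unfolding reflect_def s ..
  also have "\<dots> = u *\<^sub>R (x - A *\<^sub>R a) + v *\<^sub>R (y - B *\<^sub>R a)"
    by (simp add: algebra_simps)
  also have "\<dots> = u *\<^sub>R reflect a b x + v *\<^sub>R reflect a b y"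
    unfolding reflect_def A_def B_def ..
  finally show ?thesis .
qed

lemma refl_P: "x \<in> P \<Longrightarrow> reflect a b x \<in> P"
proof -
  assume x: "x \<in> P"
  have PP: "P = convex hull (frontier P)" using Krein_Milman_frontier[OF cvx cP] .
  have "convex {y. reflect a b y \<in> P}"
    unfolding convex_def using cvx by (auto simp: reflect_affine intro: convexD)
  moreover have "frontier P \<subseteq> {y. reflect a b y \<in> P}"
    using refl_front frontier_subset_closed[OF compact_imp_closed[OF cP]] by auto
  ultimately have "convex hull (frontier P) \<subseteq> {y. reflect a b y \<in> P}"
    by (rule hull_minimal[rotated])
  then show ?thesis using x PP by auto
qed

lemma refl_int: "(z::'a) \<in> interior P \<Longrightarrow> reflect a b z \<in> interior P"
proof -
  assume "z \<in> interior P"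
  then obtain e where e: "e > 0" "ball z e \<subseteq> P" using mem_interior by blast
  have "ball (reflect a b z) e \<subseteq> P"
  proof
    fix w assume "w \<in> ball (reflect a b z) e"
    then have "dist z (reflect a b w) < e"
      using dist_reflect[OF a0, of b z "reflect a b w"] reflect_reflect[OF a0] by (simp add: dist_commute)
    then have "reflect a b w \<in> P" using e by auto
    then show "w \<in> P" using refl_P reflect_reflect[OF a0] by metis
  qed
  then show ?thesis using e mem_interior by blast
qed

lemma vert: "y \<in> P \<Longrightarrow> \<bar>s\<bar> \<le> \<bar>hgt a b y\<bar> \<Longrightarrow> hor a b y + s *\<^sub>R nv a \<in> P"
proof -
  assume y: "y \<in> P" and s: "\<bar>s\<bar> \<le> \<bar>hgt a b y\<bar>"
  show ?thesis
  proof (cases "hgt a b y = 0")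
    case True
    then show ?thesis using y s hor_decomp[of y a b] by simp
  next
    case False
    define h where "h = hgt a b y"
    define m where "m = (1 + s / h) / 2"
    have hs: "\<bar>s / h\<bar> \<le> 1" using s False unfolding h_def by (simp add: abs_divide divide_le_eq_1)
    have c1: "s / h \<le> 1" "- (s / h) \<le> 1" using hs[unfolded abs_le_iff] by blast+
    have m1: "0 \<le> m" unfolding m_def using c1 by simp
    have m2: "m \<le> 1" unfolding m_def using c1 by simp
    note m = m1 m2
    define w where "w = hor a b y"
    have ry: "reflect a b y = w - h *\<^sub>R nv a" unfolding h_def w_def by (rule reflect_eq[OF a0])
    have yy: "y = w + h *\<^sub>R nv a" unfolding h_def w_def by (rule hor_decomp)
    have "m *\<^sub>R y + (1 - m) *\<^sub>R reflect a b y = m *\<^sub>R (w + h *\<^sub>R nv a) + (1 - m) *\<^sub>R (w - h *\<^sub>R nv a)"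
      unfolding ry by (subst yy) (rule refl)
    also have "\<dots> = w + ((2*m - 1) * h) *\<^sub>R nv a"
      by (simp add: algebra_simps flip: scaleR_add_left)
    also have "(2*m - 1) * h = s" unfolding m_def using False h_def by (simp add: field_simps)
    finally have "hor a b y + s *\<^sub>R nv a = m *\<^sub>R y + (1 - m) *\<^sub>R reflect a b y" unfolding w_def by simp
    then show ?thesis using convexD[OF cvx y refl_P[OF y], of m "1 - m"] m by simp
  qed
qed

end


definition Cset :: "'a::euclidean_space set \<Rightarrow> 'a \<Rightarrow> real \<Rightarrow> real \<Rightarrow> 'a set" where
  "Cset P a b t0 = {y. hgt a b y = 0 \<and> y + t0 *\<^sub>R nv a \<in> P}"
definition psi :: "'a::euclidean_space set \<Rightarrow> 'a \<Rightarrow> real \<Rightarrow> real \<Rightarrow> 'a \<Rightarrow> 'a" where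
  "psi P a b t0 x = closest_point (Cset P a b t0) (hor a b x) + max \<bar>hgt a b x\<bar> t0 *\<^sub>R nv a"
definition tau :: "'a::euclidean_space \<Rightarrow> real \<Rightarrow> real \<Rightarrow> 'a \<Rightarrow> real" where
  "tau a b t0 x = min \<bar>hgt a b x\<bar> t0"

lemma hgt_affine: "a \<noteq> 0 \<Longrightarrow> hgt a b c = 0 \<Longrightarrow> hgt a b u = 0 \<Longrightarrow> hgt a b (c + e *\<^sub>R (u - c)) = 0"
  by (simp add: hgt_def inner_add_right inner_diff_right algebra_simps)

lemma hor_of_hgt0: "hgt a b u = 0 \<Longrightarrow> hor a b u = u"
  by (simp add: hor_def)

context
  fixes P :: "'a::euclidean_space set" and a :: 'a and b :: real and t0 :: real
  assumes cP: "compact P" and cvx: "convex P" and a0: "a \<noteq> 0"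
    and symm: "reflect a b ` frontier P = frontier P"
    and t0: "0 < t0" and Cne: "Cset P a b t0 \<noteq> {}"
begin

lemma C_closed: "closed (Cset P a b t0)"
proof -
  have e: "Cset P a b t0 = {y. hgt a b y = 0} \<inter> ((+) (- (t0 *\<^sub>R nv a)) ` P)"
    unfolding Cset_def by (auto simp: image_iff) (metis add.commute diff_add_cancel uminus_add_conv_diff)
  show ?thesis unfolding e
    by (intro closed_Int closed_translation compact_imp_closed[OF cP] closed_Collect_eq continuous_hgt[OF a0])
       (simp add: continuous_on_const)
qed

lemma C_convex: "convex (Cset P a b t0)"
  unfolding convex_def Cset_def
proof (intro ballI allI impI, safe)
  fix x y :: 'a and u v :: real
  assume h: "hgt a b x = 0" "x + t0 *\<^sub>R nv a \<in> P" "hgt a b y = 0" "y + t0 *\<^sub>R nv a \<in> P" "0 \<le> u" "0 \<le> v" "u + v = 1"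
  have bb: "b = u * b + v * b" using h by (metis mult.commute mult_1 distrib_left)
  have ax: "a \<bullet> x = b" "a \<bullet> y = b" using h(1,3) a0 by (simp_all add: hgt_def)
  show "hgt a b (u *\<^sub>R x + v *\<^sub>R y) = 0"
    using h(7) by (simp add: hgt_def inner_add_right ax flip: distrib_right)
  have "u *\<^sub>R x + v *\<^sub>R y + t0 *\<^sub>R nv a = u *\<^sub>R (x + t0 *\<^sub>R nv a) + v *\<^sub>R (y + t0 *\<^sub>R nv a)"
    using h(7) by (simp add: algebra_simps flip: scaleR_add_left distrib_left)
  then show "u *\<^sub>R x + v *\<^sub>R y + t0 *\<^sub>R nv a \<in> P" using convexD[OF cvx h(2) h(4) h(5) h(6) h(7)] by simp
qed

lemma psi_lip: "(dist (psi P a b t0 x) (psi P a b t0 y))\<^sup>2 \<le> (dist x y)\<^sup>2 - (tau a b t0 x - tau a b t0 y)\<^sup>2"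
proof -
  let ?C = "Cset P a b t0"
  let ?cx = "closest_point ?C (hor a b x)" and ?cy = "closest_point ?C (hor a b y)"
  let ?mx = "max \<bar>hgt a b x\<bar> t0" and ?my = "max \<bar>hgt a b y\<bar> t0"
  have cx: "?cx \<in> ?C" "?cy \<in> ?C" using closest_point_in_set[OF C_closed Cne] by auto
  then have "a \<bullet> (?cx - ?cy) = 0" using hgt0_inner[OF a0] unfolding Cset_def by auto
  moreover have "psi P a b t0 x - psi P a b t0 y = (?cx - ?cy) + (?mx - ?my) *\<^sub>R nv a"
    unfolding psi_def by (simp add: algebra_simps)
  ultimately have "(dist (psi P a b t0 x) (psi P a b t0 y))\<^sup>2 = (norm (?cx - ?cy))\<^sup>2 + (?mx - ?my)\<^sup>2"
    using pyth[OF a0] by (simp add: dist_norm)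
  also have "\<dots> \<le> (norm (hor a b x - hor a b y))\<^sup>2 + (?mx - ?my)\<^sup>2"
    using closest_point_lipschitz[OF C_convex C_closed Cne, of "hor a b x" "hor a b y"]
    by (simp add: dist_norm power_mono)
  also have "\<dots> \<le> (norm (hor a b x - hor a b y))\<^sup>2 + (hgt a b x - hgt a b y)\<^sup>2 - (tau a b t0 x - tau a b t0 y)\<^sup>2"
    using maxmin_ineq[of "hgt a b x" t0 "hgt a b y"] unfolding tau_def by simp
  also have "\<dots> = (dist x y)\<^sup>2 - (tau a b t0 x - tau a b t0 y)\<^sup>2"
    using dist_decomp[OF a0, of x y b] by simp
  finally show ?thesis .
qed

lemma psi_cont: "continuous_on S (psi P a b t0)"
  unfolding psi_def
  by (intro continuous_intros continuous_on_compose2[OF continuous_on_closest_point[OF C_convex C_closed Cne]]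
        continuous_hor[OF a0] continuous_hgt[OF a0]) auto

lemma psi_fix: "x \<in> P \<Longrightarrow> t0 \<le> hgt a b x \<Longrightarrow> psi P a b t0 x = x"
proof -
  assume x: "x \<in> P" "t0 \<le> hgt a b x"
  have "hor a b x \<in> Cset P a b t0"
    unfolding Cset_def using hgt_hor[OF a0] vert[OF cP cvx a0 symm x(1), of t0] x t0 by auto
  then have "closest_point (Cset P a b t0) (hor a b x) = hor a b x" by (rule closest_point_self)
  then show ?thesis unfolding psi_def using x t0 hor_decomp[of x a b] by simp
qed

lemma psi_refl_fix: "x \<in> P \<Longrightarrow> t0 \<le> hgt a b x \<Longrightarrow> psi P a b t0 (reflect a b x) = x"
proof -
  assume x: "x \<in> P" "t0 \<le> hgt a b x"
  have "psi P a b t0 (reflect a b x) = psi P a b t0 x"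
    unfolding psi_def by (simp add: hor_reflect[OF a0] hgt_reflect[OF a0])
  then show ?thesis using psi_fix x by simp
qed

lemma tau_fix: "t0 \<le> hgt a b x \<Longrightarrow> tau a b t0 x = t0"
  unfolding tau_def by simp

lemma tau_refl: "t0 \<le> hgt a b x \<Longrightarrow> tau a b t0 (reflect a b x) = t0"
  unfolding tau_def by (simp add: hgt_reflect[OF a0])

lemma tau_zero: "hgt a b x = 0 \<Longrightarrow> tau a b t0 x = 0"
  unfolding tau_def using t0 by simp

lemma psi_front: "x \<in> frontier P \<Longrightarrow> psi P a b t0 x \<in> frontier P"
proof -
  assume xF: "x \<in> frontier P"
  have clP: "closed P" using cP by (rule compact_imp_closed)
  have xP: "x \<in> P" using xF frontier_subset_closed[OF clP] by auto
  have FP: "frontier P = P - interior P" using clP by (simp add: frontier_def)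
  let ?C = "Cset P a b t0"
  define u where "u = hor a b x"
  define c where "c = closest_point ?C u"
  have hu: "hgt a b u = 0" unfolding u_def by (rule hgt_hor[OF a0])
  have cC: "c \<in> ?C" unfolding c_def by (rule closest_point_in_set[OF C_closed Cne])
  show ?thesis
  proof (cases "t0 \<le> \<bar>hgt a b x\<bar>")
    case True
    have "u \<in> ?C"
      unfolding Cset_def u_def using hgt_hor[OF a0] vert[OF cP cvx a0 symm xP, of t0] True t0 by auto
    then have "c = u" unfolding c_def by (rule closest_point_self)
    then have ps: "psi P a b t0 x = u + \<bar>hgt a b x\<bar> *\<^sub>R nv a"
      unfolding psi_def c_def u_def using True by simp
    show ?thesis
    proof (cases "0 \<le> hgt a b x")
      case True
      then show ?thesis using ps xF hor_decomp[of x a b] unfolding u_def by simp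
    next
      case False
      then have "psi P a b t0 x = reflect a b x" using ps reflect_eq[OF a0, of b x] unfolding u_def by simp
      then show ?thesis using refl_front[OF cP cvx a0 symm xF] by simp
    qed
  next
    case False
    then have ps: "psi P a b t0 x = c + t0 *\<^sub>R nv a" unfolding psi_def c_def u_def by simp
    define z where "z = c + t0 *\<^sub>R nv a"
    have zP: "z \<in> P" using cC unfolding Cset_def z_def by simp
    have "z \<notin> interior P"
    proof
      assume zI: "z \<in> interior P"
      show False
      proof (cases "u \<in> ?C")
        case True
        then have cu: "c = u" unfolding c_def by (rule closest_point_self)
        have hz: "hgt a b z = t0" unfolding z_def cu using hgt_plus[OF a0] hu by simp
        have hoz: "hor a b z = u" unfolding z_def cu using hor_plus[OF a0] hor_of_hgt0[OF hu] by simp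
        have rz: "reflect a b z = u - t0 *\<^sub>R nv a" using reflect_eq[OF a0, of b z] hz hoz by simp
        have rzI: "reflect a b z \<in> interior P" using refl_int[OF cP cvx a0 symm zI] .
        define h where "h = hgt a b x"
        have hl: "\<bar>h\<bar> < t0" using False h_def by simp
        define m where "m = (1 + h / t0) / 2"
        have m: "0 \<le> m" "m \<le> 1" unfolding m_def using hl t0 by (auto simp: abs_less_iff field_simps)
        have "m *\<^sub>R z + (1 - m) *\<^sub>R reflect a b z = u + ((2*m - 1) * t0) *\<^sub>R nv a"
          by (simp only: rz) (simp add: z_def cu algebra_simps flip: scaleR_add_left)
        also have "(2*m - 1) * t0 = h" unfolding m_def using t0 by (simp add: field_simps)
        also have "u + h *\<^sub>R nv a = x" unfolding u_def h_def by (rule hor_decomp[symmetric])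
        finally have "x = m *\<^sub>R z + (1 - m) *\<^sub>R reflect a b z" by simp
        then have "x \<in> interior P" using convexD[OF convex_interior[OF cvx] zI rzI, of m "1 - m"] m by simp
        then show False using xF FP by auto
      next
        case False
        then have cu: "c \<noteq> u" using cC by auto
        obtain e where e: "e > 0" "ball z e \<subseteq> P" using zI mem_interior by blast
        define n where "n = norm (u - c)"
        have n: "n > 0" unfolding n_def using cu by simp
        define eps where "eps = min (1/2) (e / (2 * n))"
        have eps: "0 < eps" "eps < 1" "eps * n < e" unfolding eps_def using e n
          by (auto simp: min_def field_simps)
        define w where "w = c + eps *\<^sub>R (u - c)"
        have hc: "hgt a b c = 0" using cC unfolding Cset_def by simp
        have hw: "hgt a b w = 0" unfolding w_def using hgt_affine[OF a0 hc hu] .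
        have "dist z (w + t0 *\<^sub>R nv a) = eps * n" unfolding z_def w_def n_def dist_norm using eps by simp
        then have "w + t0 *\<^sub>R nv a \<in> P" using e eps by auto
        then have wC: "w \<in> ?C" unfolding Cset_def using hw by simp
        have "dist u w = (1 - eps) * n" unfolding w_def n_def dist_norm
        proof -
          have "u - (c + eps *\<^sub>R (u - c)) = (1 - eps) *\<^sub>R (u - c)" by (simp add: algebra_simps)
          then show "norm (u - (c + eps *\<^sub>R (u - c))) = (1 - eps) * norm (u - c)" using eps by simp
        qed
        also have "\<dots> < n" using eps n by simp
        also have "n = dist u c" unfolding n_def by (simp add: dist_norm)
        finally have "dist u w < dist u c" .
        moreover have "dist u c \<le> dist u w" unfolding c_def by (rule closest_point_le[OF C_closed wC])
        ultimately show False by simp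
      qed
    qed
    then show ?thesis using ps zP FP unfolding z_def by simp
  qed
qed

end


lemma linepath_lip: "dist (linepath x y s) (linepath x y t) \<le> norm (y - x) * \<bar>s - t\<bar>"
proof -
  have "linepath x y s - linepath x y t = (s - t) *\<^sub>R (y - x)"
    unfolding linepath_def by (simp add: algebra_simps)
  then show ?thesis by (simp add: dist_norm mult.commute)
qed

lemma join_lip:
  assumes g1: "\<forall>s\<in>{0..1}. \<forall>t\<in>{0..1}. dist (g1 s) (g1 t) \<le> K * \<bar>s - t\<bar>"
    and g2: "\<forall>s\<in>{0..1}. \<forall>t\<in>{0..1}. dist (g2 s) (g2 t) \<le> K * \<bar>s - t\<bar>"
    and K: "0 \<le> K" and e: "g1 1 = g2 0"
  shows "\<forall>s\<in>{0..1}. \<forall>t\<in>{0..1}. dist ((g1 +++ g2) s) ((g1 +++ g2) t) \<le> (2 * K) * \<bar>s - t\<bar>"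
proof (intro ballI)
  have cross: "dist (g1 (2 * s)) (g2 (2 * t - 1)) \<le> (2 * K) * \<bar>s - t\<bar>"
    if "s \<in> {0..1}" "t \<in> {0..1}" "s \<le> 1/2" "\<not> t \<le> 1/2" for s t
  proof -
    have "dist (g1 (2 * s)) (g2 (2 * t - 1)) \<le> dist (g1 (2 * s)) (g1 1) + dist (g2 0) (g2 (2 * t - 1))"
      using e dist_triangle by metis
    also have "\<dots> \<le> K * \<bar>2 * s - 1\<bar> + K * \<bar>0 - (2 * t - 1)\<bar>"
      using g1[rule_format, of "2 * s" 1] g2[rule_format, of 0 "2 * t - 1"] that by (intro add_mono) auto
    also have "\<dots> = (2 * K) * \<bar>s - t\<bar>" using that K by (simp add: abs_if algebra_simps)
    finally show ?thesis .
  qed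
  fix s t :: real assume st: "s \<in> {0..1}" "t \<in> {0..1}"
  show "dist ((g1 +++ g2) s) ((g1 +++ g2) t) \<le> (2 * K) * \<bar>s - t\<bar>"
  proof (cases "s \<le> 1/2"; cases "t \<le> 1/2")
    assume "s \<le> 1/2" "t \<le> 1/2"
    then have "dist (g1 (2 * s)) (g1 (2 * t)) \<le> K * \<bar>2 * s - 2 * t\<bar>" using g1[rule_format, of "2 * s" "2 * t"] st by auto
    then show ?thesis using \<open>s \<le> 1/2\<close> \<open>t \<le> 1/2\<close> by (simp add: joinpaths_def abs_if algebra_simps split: if_splits)
  next
    assume "\<not> s \<le> 1/2" "\<not> t \<le> 1/2"
    then have "dist (g2 (2 * s-1)) (g2 (2 * t-1)) \<le> K * \<bar>(2 * s-1) - (2 * t-1)\<bar>" using g2[rule_format, of "2 * s - 1" "2 * t - 1"] st by auto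
    then show ?thesis using \<open>\<not> s \<le> 1/2\<close> \<open>\<not> t \<le> 1/2\<close> by (simp add: joinpaths_def abs_if algebra_simps split: if_splits)
  next
    assume "s \<le> 1/2" "\<not> t \<le> 1/2"
    then show ?thesis using cross[OF st] by (simp add: joinpaths_def)
  next
    assume "\<not> s \<le> 1/2" "t \<le> 1/2"
    then show ?thesis using cross[OF st(2,1)] by (simp add: joinpaths_def dist_commute abs_minus_commute)
  qed
qed

lemma lip_mono:
  assumes "\<forall>s\<in>{0..1}. \<forall>t\<in>{0..1}. dist (g s) (g t) \<le> K * \<bar>s - t\<bar>" "K \<le> K'"
  shows "\<forall>s\<in>{0..1}. \<forall>t\<in>{0..1}. dist (g s) (g t) \<le> K' * \<bar>s - t\<bar>"
  using assms by (meson abs_ge_zero mult_right_mono order_trans)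

lemma not_interior_frontier_cp:
  fixes P :: "'a::euclidean_space set"
  assumes "compact P" "convex P" "interior P \<noteq> {}" "x \<notin> interior P"
  shows "closest_point P x \<in> frontier P"
proof (cases "x \<in> P")
  case True
  then show ?thesis using assms closest_point_self[OF True]
    by (simp add: frontier_def compact_imp_closed)
next
  case False
  have ne: "P \<noteq> {}" using assms(3) interior_subset by blast
  have "closest_point P x \<in> rel_frontier P"
    using assms False affine_hull_nonempty_interior[OF assms(3)] rel_interior_nonempty_interior[OF assms(3)]
    by (intro closest_point_in_rel_frontier compact_imp_closed ne) auto
  then show ?thesis using rel_frontier_frontier[OF affine_hull_nonempty_interior[OF assms(3)]] by simp
qed

lemma ray_out:
  fixes P :: "'a::euclidean_space set"
  assumes "convex P" "c \<in> interior P" "u \<in> frontier P" "1 \<le> k"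
  shows "c + k *\<^sub>R (u - c) \<notin> interior P"
proof
  assume y: "c + k *\<^sub>R (u - c) \<in> interior P"
  have "u = (1 - 1/k) *\<^sub>R c + (1/k) *\<^sub>R (c + k *\<^sub>R (u - c))"
    using assms(4) by (simp add: algebra_simps)
  then have "u \<in> interior P"
    using convexD[OF convex_interior[OF assms(1)] assms(2) y, of "1 - 1/k" "1/k"] assms(4) by simp
  then show False using assms(3) by (simp add: frontier_def)
qed

lemma frontier_finite_dist:
  fixes P :: "'a::euclidean_space set"
  assumes dim: "DIM('a) \<ge> 2" and cP: "compact P" and cvx: "convex P" and int: "interior P \<noteq> {}"
    and u: "u \<in> frontier P" and v: "v \<in> frontier P"
  shows "intrinsic_dist (frontier P) u v < \<infinity>"
proof -
  obtain c where c: "c \<in> interior P" using int by blast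
  obtain B where B: "B > 0" "\<forall>x\<in>P. norm x \<le> B" using compact_imp_bounded[OF cP] bounded_pos by metis
  define R0 where "R0 = norm c + B"
  have R0a: "\<forall>x\<in>P. dist c x \<le> R0"
  proof
    fix x assume "x \<in> P"
    then have "norm x \<le> B" using B by auto
    moreover have "dist c x \<le> norm c + norm x" unfolding dist_norm by (rule norm_triangle_ineq4)
    ultimately show "dist c x \<le> R0" unfolding R0_def by simp
  qed
  have "0 < R0" unfolding R0_def using B by (metis add_nonneg_pos norm_ge_zero)
  note R0 = R0a this
  define R where "R = 2 * R0 + 2"
  have uc: "u \<noteq> c" "v \<noteq> c" using u v c by (auto simp: frontier_def)
  have uP: "u \<in> P" "v \<in> P" using u v frontier_subset_closed[OF compact_imp_closed[OF cP]] by auto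
  define nu where "nu = norm (u - c)"
  define nv' where "nv' = norm (v - c)"
  have nu: "0 < nu" "nu \<le> R0" "0 < nv'" "nv' \<le> R0" using uc R0 uP unfolding nu_def nv'_def
    by (auto simp: dist_norm norm_minus_commute)
  define eu where "eu = (1/nu) *\<^sub>R (u - c)"
  define ev where "ev = (1/nv') *\<^sub>R (v - c)"
  have eu1: "norm eu = 1" "norm ev = 1" using nu unfolding eu_def ev_def nu_def nv'_def by auto
  obtain ew where ew: "norm ew = 1" "0 \<le> ew \<bullet> eu" "0 \<le> ew \<bullet> ev"
  proof (cases "0 \<le> eu \<bullet> ev")
    case True
    then show ?thesis using that[of eu] eu1 by (simp add: inner_commute dot_square_norm)
  next
    case False
    obtain y where y: "y \<noteq> 0" "orthogonal eu y" using orthogonal_to_vector_exists[OF dim] by blast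
    define y' where "y' = (if 0 \<le> y \<bullet> ev then (1/norm y) *\<^sub>R y else (- 1/norm y) *\<^sub>R y)"
    have "norm y' = 1" using y unfolding y'_def by auto
    moreover have "y' \<bullet> eu = 0" using y unfolding y'_def orthogonal_def by (simp add: inner_commute)
    moreover have "0 \<le> y' \<bullet> ev" unfolding y'_def using y
      by (auto simp: divide_simps mult_le_0_iff)
    ultimately show ?thesis using that by simp
  qed
  define U where "U = c + R *\<^sub>R eu"
  define V where "V = c + R *\<^sub>R ev"
  define W where "W = c + R *\<^sub>R ew"
  have far: "x \<notin> interior P" if "x = c + R *\<^sub>R ((1 - t) *\<^sub>R ea + t *\<^sub>R eb)" "norm ea = 1" "norm eb = 1"
    "0 \<le> ea \<bullet> eb" "0 \<le> t" "t \<le> 1" for x ea eb t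
  proof
    assume "x \<in> interior P"
    then have "dist c x \<le> R0" using R0 interior_subset by blast
    moreover have "(norm ((1 - t) *\<^sub>R ea + t *\<^sub>R eb))\<^sup>2 = (1-t)\<^sup>2 + t\<^sup>2 + 2 * (1-t) * t * (ea \<bullet> eb)"
    proof -
      have ee: "ea \<bullet> ea = 1" "eb \<bullet> eb = 1" using that(2,3) by (simp_all add: dot_square_norm)
      have "(norm ((1 - t) *\<^sub>R ea + t *\<^sub>R eb))\<^sup>2 = ((1 - t) *\<^sub>R ea + t *\<^sub>R eb) \<bullet> ((1 - t) *\<^sub>R ea + t *\<^sub>R eb)"
        by (rule power2_norm_eq_inner)
      also have "\<dots> = (1-t)\<^sup>2 * (ea \<bullet> ea) + t\<^sup>2 * (eb \<bullet> eb) + 2 * (1-t) * t * (ea \<bullet> eb)"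
        by (simp add: inner_add_left inner_add_right inner_commute power2_eq_square algebra_simps)
      finally show ?thesis using ee by simp
    qed
    moreover have "0 \<le> 2 * (1-t) * t * (ea \<bullet> eb)" using that by simp
    moreover have "1/2 \<le> (1-t)\<^sup>2 + t\<^sup>2"
    proof -
      have "(1-t)\<^sup>2 + t\<^sup>2 = 2 * (t - 1/2)\<^sup>2 + 1/2" by (simp add: power2_eq_square algebra_simps)
      moreover have "0 \<le> (t - 1/2)\<^sup>2" by simp
      ultimately show ?thesis by linarith
    qed
    ultimately have n2: "1/2 \<le> (norm ((1 - t) *\<^sub>R ea + t *\<^sub>R eb))\<^sup>2" by linarith
    have "dist c x = R * norm ((1 - t) *\<^sub>R ea + t *\<^sub>R eb)" using that R0 unfolding R_def
      by (simp add: dist_norm)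
    then have "(dist c x)\<^sup>2 = R\<^sup>2 * (norm ((1 - t) *\<^sub>R ea + t *\<^sub>R eb))\<^sup>2" by (simp add: power_mult_distrib)
    also have "\<dots> \<ge> R\<^sup>2 * (1/2)" using n2 by (intro mult_left_mono) auto
    finally have "R\<^sup>2 / 2 \<le> (dist c x)\<^sup>2" by simp
    moreover have "(dist c x)\<^sup>2 \<le> R0\<^sup>2" using \<open>dist c x \<le> R0\<close> by (simp add: power_mono)
    moreover have "R0\<^sup>2 < R\<^sup>2 / 2" unfolding R_def using R0(2)
      by (simp add: power2_eq_square algebra_simps) (smt (verit) mult_pos_pos)
    ultimately show False by simp
  qed
  have seg1: "closed_segment u U \<inter> interior P = {}"
  proof -
    { fix x assume "x \<in> closed_segment u U"
      then obtain t where t: "0 \<le> t" "t \<le> 1" "x = (1 - t) *\<^sub>R u + t *\<^sub>R U" by (auto simp: in_segment)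
      have "x = c + (1 - t + t * (R / nu)) *\<^sub>R (u - c)"
        unfolding t(3) U_def eu_def using nu by (simp add: algebra_simps)
      moreover have "1 \<le> 1 - t + t * (R / nu)"
      proof -
        have "1 \<le> R / nu" using nu unfolding R_def by (simp add: field_simps)
        then have "t * 1 \<le> t * (R / nu)" using t by (intro mult_left_mono) auto
        then show ?thesis by simp
      qed
      ultimately have "x \<notin> interior P" using ray_out[OF cvx c u] by simp }
    then show ?thesis by blast
  qed
  have seg4: "closed_segment V v \<inter> interior P = {}"
  proof -
    { fix x assume "x \<in> closed_segment V v"
      then have "x \<in> closed_segment v V" by (simp add: closed_segment_commute)
      then obtain t where t: "0 \<le> t" "t \<le> 1" "x = (1 - t) *\<^sub>R v + t *\<^sub>R V" by (auto simp: in_segment)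
      have "x = c + (1 - t + t * (R / nv')) *\<^sub>R (v - c)"
        unfolding t(3) V_def ev_def using nu by (simp add: algebra_simps)
      moreover have "1 \<le> 1 - t + t * (R / nv')"
      proof -
        have "1 \<le> R / nv'" using nu unfolding R_def by (simp add: field_simps)
        then have "t * 1 \<le> t * (R / nv')" using t by (intro mult_left_mono) auto
        then show ?thesis by simp
      qed
      ultimately have "x \<notin> interior P" using ray_out[OF cvx c v] by simp }
    then show ?thesis by blast
  qed
  have seg2: "closed_segment U W \<inter> interior P = {}"
  proof -
    { fix x assume "x \<in> closed_segment U W"
      then obtain t where t: "0 \<le> t" "t \<le> 1" "x = (1 - t) *\<^sub>R U + t *\<^sub>R W" by (auto simp: in_segment)
      have "x = c + R *\<^sub>R ((1 - t) *\<^sub>R eu + t *\<^sub>R ew)"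
        unfolding t(3) U_def W_def by (simp add: algebra_simps)
      then have "x \<notin> interior P" using far[where x=x and ea=eu and eb=ew and t=t] eu1 ew t by (simp add: inner_commute) }
    then show ?thesis by blast
  qed
  have seg3: "closed_segment W V \<inter> interior P = {}"
  proof -
    { fix x assume "x \<in> closed_segment W V"
      then obtain t where t: "0 \<le> t" "t \<le> 1" "x = (1 - t) *\<^sub>R W + t *\<^sub>R V" by (auto simp: in_segment)
      have "x = c + R *\<^sub>R ((1 - t) *\<^sub>R ew + t *\<^sub>R ev)"
        unfolding t(3) V_def W_def by (simp add: algebra_simps)
      then have "x \<notin> interior P" using far[where x=x and ea=ew and eb=ev and t=t] eu1 ew t by (simp add: inner_commute) }
    then show ?thesis by blast
  qed
  define G where "G = linepath u U +++ (linepath U W +++ (linepath W V +++ linepath V v))"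
  have pG: "path G" unfolding G_def by simp
  have iG: "path_image G \<inter> interior P = {}"
    unfolding G_def using seg1 seg2 seg3 seg4 by (simp add: path_image_join Int_Un_distrib2)
  define K where "K = max (max (norm (U - u)) (norm (W - U))) (max (norm (V - W)) (norm (v - V)))"
  have K0: "0 \<le> K" unfolding K_def by (simp add: le_max_iff_disj)
  have kk: "norm (U - u) \<le> K" "norm (W - U) \<le> K" "norm (V - W) \<le> K" "norm (v - V) \<le> K"
    unfolding K_def by auto
  have l: "\<forall>s\<in>{0..1}. \<forall>t\<in>{0..1}. dist (linepath x y s) (linepath x y t) \<le> K * \<bar>s - t\<bar>"
    if "norm (y - x) \<le> K" for x y
    using lip_mono[of "linepath x y" "norm (y - x)" K] linepath_lip that by blast
  have l1: "\<forall>s\<in>{0..1}. \<forall>t\<in>{0..1}. dist (linepath x y s) (linepath x y t) \<le> (8 * K) * \<bar>s - t\<bar>"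
    if "norm (y - x) \<le> K" for x y
    using lip_mono[OF l[OF that], of "8 * K"] K0 by simp
  have l4: "\<forall>s\<in>{0..1}. \<forall>t\<in>{0..1}. dist (linepath x y s) (linepath x y t) \<le> (2 * (2 * K)) * \<bar>s - t\<bar>"
    if "norm (y - x) \<le> K" for x y
    using lip_mono[OF l[OF that], of "2 * (2 * K)"] K0 by simp
  have l2: "\<forall>s\<in>{0..1}. \<forall>t\<in>{0..1}. dist (linepath x y s) (linepath x y t) \<le> (2 * K) * \<bar>s - t\<bar>"
    if "norm (y - x) \<le> K" for x y
    using lip_mono[OF l[OF that], of "2 * K"] K0 by simp
  have j3: "\<forall>s\<in>{0..1}. \<forall>t\<in>{0..1}. dist ((linepath W V +++ linepath V v) s) ((linepath W V +++ linepath V v) t) \<le> (2 * K) * \<bar>s - t\<bar>"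
    by (rule join_lip[OF l l K0]) (auto simp: kk K0 linepath_def)
  have j2: "\<forall>s\<in>{0..1}. \<forall>t\<in>{0..1}. dist ((linepath U W +++ (linepath W V +++ linepath V v)) s) ((linepath U W +++ (linepath W V +++ linepath V v)) t) \<le> (2 * (2 * K)) * \<bar>s - t\<bar>"
    by (rule join_lip[OF l2 j3]) (auto simp: kk K0 linepath_def joinpaths_def)
  have j1: "\<forall>s\<in>{0..1}. \<forall>t\<in>{0..1}. dist (G s) (G t) \<le> (2 * (2 * (2 * K))) * \<bar>s - t\<bar>"
    unfolding G_def by (rule join_lip[OF l4 j2]) (auto simp: kk K0 linepath_def joinpaths_def)
  have LG: "path_len G \<le> ereal (8 * K)" using path_len_lip[OF j1] K0 by simp
  define g where "g = closest_point P \<circ> G"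
  have ne: "P \<noteq> {}" using int interior_subset by blast
  have pg: "path g" unfolding g_def
    by (rule path_continuous_image[OF pG continuous_on_closest_point[OF cvx compact_imp_closed[OF cP] ne]])
  have ig: "path_image g \<subseteq> frontier P" unfolding g_def path_image_compose
    using not_interior_frontier_cp[OF cP cvx int] iG by auto
  have sg: "pathstart g = u" "pathfinish g = v" unfolding g_def pathstart_def pathfinish_def G_def
    using closest_point_self[of u P] closest_point_self[of v P] uP
    by (auto simp: joinpaths_def linepath_def)
  have "path_len g \<le> path_len G" unfolding g_def
    by (rule path_len_comp_lip1) (simp add: closest_point_lipschitz[OF cvx compact_imp_closed[OF cP] ne])
  then have "path_len g < \<infinity>" by (rule le_less_trans[OF order_trans[OF _ LG]]) simp
  moreover have "intrinsic_dist (frontier P) u v \<le> path_len g"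
    unfolding intrinsic_dist_def by (rule INF_lower) (use pg ig sg in auto)
  ultimately show ?thesis by (rule le_less_trans[rotated])
qed



lemma dist_refl_le:
  fixes P :: "'a::euclidean_space set"
  assumes a0: "a \<noteq> 0" and symm: "reflect a b ` frontier P = frontier P"
    and pH: "reflect a b p = p"
  shows "intrinsic_dist (frontier P) p (reflect a b x) \<le> intrinsic_dist (frontier P) p x"
  unfolding intrinsic_dist_def
proof (rule INF_mono)
  fix g assume g: "g \<in> {g. path g \<and> path_image g \<subseteq> frontier P \<and> pathstart g = p \<and> pathfinish g = x}"
  let ?h = "reflect a b \<circ> g"
  have "path ?h"
    using g a0 by (intro path_continuous_image) (auto simp: reflect_def intro!: continuous_intros)
  moreover have "path_image ?h \<subseteq> frontier P" using g symm by (auto simp: path_image_compose)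
  moreover have "pathstart ?h = p" "pathfinish ?h = reflect a b x" using g pH by (auto simp: pathstart_def pathfinish_def)
  moreover have "path_len ?h \<le> path_len g"
    by (rule path_len_comp_lip1) (simp add: dist_reflect[OF a0])
  ultimately show "\<exists>n\<in>{g. path g \<and> path_image g \<subseteq> frontier P \<and> pathstart g = p \<and> pathfinish g = reflect a b x}. path_len n \<le> path_len g"
    by blast
qed

lemma real_gap:
  fixes L D d c :: real
  assumes "L < D + d" "D \<le> L" "0 < L" "d \<le> 1" "d \<le> c / (D + 1)" "0 < c" "0 \<le> D"
  shows "L - c / L < D"
proof -
  have "L \<le> D + 1" using assms by simp
  then have "c / (D + 1) \<le> c / L" using assms by (intro divide_left_mono) auto
  then show ?thesis using assms by linarith
qed

lemma side_main:
  fixes P :: "'a::euclidean_space set"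
  assumes dim: "DIM('a) \<ge> 2" and cP: "compact P" and cvx: "convex P" and int: "interior P \<noteq> {}"
    and a0: "a \<noteq> 0" and symm: "reflect a b ` frontier P = frontier P"
    and pM: "p \<in> frontier P" and far: "farthest_point (frontier P) p q"
    and hp: "0 < hgt a b p" and hq: "0 < hgt a b q"
  shows False
proof -
  let ?M = "frontier P"
  have clP: "closed P" using cP by (rule compact_imp_closed)
  have qM: "q \<in> ?M" using far unfolding farthest_point_def by simp
  have pP: "p \<in> P" "q \<in> P" using pM qM frontier_subset_closed[OF clP] by auto
  define t0 where "t0 = min (hgt a b p) (hgt a b q)"
  have t0: "0 < t0" "t0 \<le> hgt a b p" "t0 \<le> hgt a b q" using hp hq unfolding t0_def by auto
  have "hor a b q \<in> Cset P a b t0"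
    unfolding Cset_def using hgt_hor[OF a0] vert[OF cP cvx a0 symm pP(2), of t0] t0 by auto
  then have Cne: "Cset P a b t0 \<noteq> {}" by auto
  define rq where "rq = reflect a b q"
  have rqM: "rq \<in> ?M" unfolding rq_def using refl_front[OF cP cvx a0 symm qM] .
  define D where "D = intrinsic_dist ?M p rq"
  have Dle: "D \<le> intrinsic_dist ?M p q" using far rqM unfolding farthest_point_def D_def by blast
  have dq: "intrinsic_dist ?M p q < \<infinity>" by (rule frontier_finite_dist[OF dim cP cvx int pM qM])
  have D0: "0 \<le> D" unfolding D_def intrinsic_dist_def by (rule INF_greatest) (rule path_len_nonneg)
  have "intrinsic_dist ?M p q < D"
  proof (cases D)
    case PInf
    then show ?thesis using dq by simp
  next
    case MInf
    then show ?thesis using D0 by simp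
  next
    case (real D')
    have D'0: "0 \<le> D'" using D0 real by simp
    define c where "c = 2 * t0\<^sup>2"
    have c0: "0 < c" unfolding c_def using t0 by simp
    define d where "d = min 1 (c / (D' + 1))"
    have d: "0 < d" "d \<le> 1" "d \<le> c / (D' + 1)" unfolding d_def using c0 D'0 by auto
    have "D < ereal (D' + d)" using real d by simp
    then obtain g where g: "g \<in> {g. path g \<and> path_image g \<subseteq> ?M \<and> pathstart g = p \<and> pathfinish g = rq}"
        and gl: "path_len g < ereal (D' + d)"
      unfolding D_def intrinsic_dist_def INF_less_iff by blast
    have "D \<le> path_len g" unfolding D_def intrinsic_dist_def by (rule INF_lower[OF g])
    then obtain L where L: "path_len g = ereal L" "D' \<le> L" "L < D' + d"
      using gl real by (cases "path_len g") auto
    have pg: "path g" and ig: "path_image g \<subseteq> ?M" and sg: "g 0 = p" "g 1 = rq"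
      using g by (auto simp: pathstart_def pathfinish_def)
    have "continuous_on {0..1} (hgt a b \<circ> g)"
      using pg unfolding path_def by (intro continuous_on_compose continuous_hgt[OF a0])
    moreover have "(hgt a b \<circ> g) 1 \<le> 0" "0 \<le> (hgt a b \<circ> g) 0"
      using sg hp hq hgt_reflect[OF a0] unfolding rq_def by auto
    ultimately obtain s where s: "0 \<le> s" "s \<le> 1" "hgt a b (g s) = 0"
      using IVT2'[of "hgt a b \<circ> g" 1 0 0] by auto
    have gain: "0 < L \<and> path_len (psi P a b t0 \<circ> g) \<le> ereal (L - 2 * t0\<^sup>2 / L)"
    proof (rule path_len_gain[OF L(1) t0(1)])
      show "\<forall>x\<in>path_image g. \<forall>y\<in>path_image g. (dist (psi P a b t0 x) (psi P a b t0 y))\<^sup>2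
          \<le> (dist x y)\<^sup>2 - (tau a b t0 x - tau a b t0 y)\<^sup>2"
        using psi_lip[OF cP cvx a0 symm t0(1) Cne] by blast
      show "tau a b t0 (g 0) = t0" using sg t0 by (simp add: tau_def)
      show "tau a b t0 (g 1) = t0" using sg hgt_reflect[OF a0] t0 unfolding rq_def by (simp add: tau_def)
      show "s \<in> {0..1}" using s by simp
      show "tau a b t0 (g s) = 0" using s t0 by (simp add: tau_def)
    qed
    let ?h = "psi P a b t0 \<circ> g"
    have "path ?h" by (rule path_continuous_image[OF pg psi_cont[OF cP cvx a0 symm t0(1) Cne]])
    moreover have "path_image ?h \<subseteq> ?M"
      using ig psi_front[OF cP cvx a0 symm t0(1) Cne] by (auto simp: path_image_compose)
    moreover have "pathstart ?h = p" using sg psi_fix[OF cP cvx a0 symm t0(1) Cne pP(1) t0(2)]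
      by (simp add: pathstart_def)
    moreover have "pathfinish ?h = q" using sg psi_refl_fix[OF cP cvx a0 symm t0(1) Cne pP(2) t0(3)]
      unfolding rq_def by (simp add: pathfinish_def)
    ultimately have "intrinsic_dist ?M p q \<le> path_len ?h"
      unfolding intrinsic_dist_def by (intro INF_lower) auto
    also have "\<dots> \<le> ereal (L - c / L)" using gain unfolding c_def by simp
    also have "\<dots> < ereal D'"
      using real_gap[of L D' d c] L d c0 D'0 gain by simp
    finally show ?thesis using real by simp
  qed
  then show False using Dle by simp
qed



lemma reflect_neg1: "reflect (- a) (- b) x = reflect a b x"
proof -
  have e: "2 * ((- a) \<bullet> x - - b) / ((- a) \<bullet> (- a)) = - (2 * (a \<bullet> x - b) / (a \<bullet> a))"
    by (simp add: minus_divide_left algebra_simps)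
  show ?thesis unfolding reflect_def e by simp
qed

lemma reflect_neg: "reflect (- a) (- b) = reflect a b"
  by (rule ext) (rule reflect_neg1)

lemma hgt_neg: "hgt (- a) (- b) x = - hgt a b x"
  by (simp add: hgt_def algebra_simps minus_divide_left)

lemma hgt_pos_iff: "a \<noteq> 0 \<Longrightarrow> 0 < hgt a b x \<longleftrightarrow> 0 < a \<bullet> x - b"
  by (simp add: hgt_def divide_pos_pos zero_less_divide_iff)

theorem mainTheorem6:
  fixes P :: "'a::euclidean_space set" and a :: 'a and b :: real and p q :: 'a
  assumes dim: "DIM('a) \<ge> 2"
    and poly: "polytope P" and body: "interior P \<noteq> {}"
    and a0: "a \<noteq> 0"
    and symm: "reflect a b ` (frontier P) = frontier P"
    and pM: "p \<in> frontier P"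
    and far: "farthest_point (frontier P) p q"
  shows "(p \<notin> {x. a \<bullet> x = b} \<and> q \<notin> {x. a \<bullet> x = b} \<longrightarrow>
            (a \<bullet> p - b) * (a \<bullet> q - b) < 0)
       \<and> (p \<in> {x. a \<bullet> x = b} \<longrightarrow> farthest_point (frontier P) p (reflect a b q))"
proof (intro conjI impI)
  have cP: "compact P" using poly by (rule polytope_imp_compact)
  have cvx: "convex P" using poly by (rule polytope_imp_convex)
  {
    assume H: "p \<notin> {x. a \<bullet> x = b} \<and> q \<notin> {x. a \<bullet> x = b}"
    show "(a \<bullet> p - b) * (a \<bullet> q - b) < 0"
    proof (rule ccontr)
      assume "\<not> (a \<bullet> p - b) * (a \<bullet> q - b) < 0"
      then have nn: "0 \<le> (a \<bullet> p - b) * (a \<bullet> q - b)" by simp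
      have ne: "a \<bullet> p - b \<noteq> 0" "a \<bullet> q - b \<noteq> 0" using H by auto
      show False
      proof (cases "0 < a \<bullet> p - b")
        case True
        then have "0 < a \<bullet> q - b" using nn ne by (meson linorder_neqE_linordered_idom mult_pos_neg not_le)
        then show False
          using side_main[OF dim cP cvx body a0 symm pM far] True hgt_pos_iff[OF a0] by blast
      next
        case False
        then have p': "0 < (- a) \<bullet> p - (- b)" using ne by simp
        have "a \<bullet> q - b < 0" using nn ne False
          by (metis linorder_neqE_linordered_idom mult_neg_pos not_le)
        then have q': "0 < (- a) \<bullet> q - (- b)" by simp
        have a0': "- a \<noteq> 0" using a0 by simp
        have symm': "reflect (- a) (- b) ` (frontier P) = frontier P" unfolding reflect_neg by (rule symm)
        show False
          using side_main[OF dim cP cvx body a0' symm' pM far] p' q' hgt_pos_iff[OF a0'] by blast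
      qed
    qed
  }
  {
    assume pH: "p \<in> {x. a \<bullet> x = b}"
    have rp: "reflect a b p = p" using pH by (simp add: reflect_def)
    have qM: "q \<in> frontier P" using far unfolding farthest_point_def by simp
    have rqM: "reflect a b q \<in> frontier P" using symm qM by blast
    have "intrinsic_dist (frontier P) p q = intrinsic_dist (frontier P) p (reflect a b (reflect a b q))"
      using reflect_reflect[OF a0] by simp
    also have "\<dots> \<le> intrinsic_dist (frontier P) p (reflect a b q)"
      by (rule dist_refl_le[OF a0 symm rp])
    finally have le: "intrinsic_dist (frontier P) p q \<le> intrinsic_dist (frontier P) p (reflect a b q)" .
    show "farthest_point (frontier P) p (reflect a b q)"
      unfolding farthest_point_def using rqM far le unfolding farthest_point_def by (meson order_trans)
  }
qed

end
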